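(* Let $A, B_1, \ldots, B_m \in \mathbb{C}^{d\times d}$ and let $D_{A,B}=\overline{A}\otimes A+\sum_{k=1}^m \overline{B}_k\otimes B_k$, $C_{A,B}=\overline{A}\otimes I+I\otimes A+\sum_{k=1}^m \overline{B}_k\otimes B_k$, $N_{A,B}=A^*A+\sum_{k=1}^m B_k^*B_k$, $M_{A,B}=A+A^*+\sum_{k=1}^m B_k^*B_k$. If $N_{A,B}=\beta I$ for a scalar $\beta$, then $\rho(D_{A,B})=\beta$. If $M_{A,B}=\beta I$ for a scalar $\beta$, then $\alpha(C_{A,B})=\beta$.
   Context: $\overline{X}$ denotes entrywise complex conjugate, $X^*$ conjugate transpose, $I$ the identity, $\otimes$ the Kronecker product. For a square matrix $X$, $\rho(X)=\max\{|\lambda|\}$ over eigenvalues $\lambda$ of $X$ (spectral radius) and $\alpha(X)=\max\{\operatorname{Re}\lambda\}$ over eigenvalues $\lambda$ of $X$ (spectral abscissa). *)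

theory Defs
  imports "Jordan_Normal_Form.Spectral_Radius" "Jordan_Normal_Form.Schur_Decomposition"
begin

definition mat_cnj :: "complex mat \<Rightarrow> complex mat" where
  "mat_cnj A = map_mat cnj A"

text \<open>Kronecker product: block (i,j) of the result is A(i,j) * B.\<close>
definition kron :: "complex mat \<Rightarrow> complex mat \<Rightarrow> complex mat" where
  "kron A B = mat (dim_row A * dim_row B) (dim_col A * dim_col B)
     (\<lambda>(i, j). A $$ (i div dim_row B, j div dim_col B) * B $$ (i mod dim_row B, j mod dim_col B))"

definition msum :: "nat \<Rightarrow> complex mat list \<Rightarrow> complex mat" where
  "msum n Ms = foldr (+) Ms (0\<^sub>m n n)"

definition spectral_abscissa :: "complex mat \<Rightarrow> real" where
  "spectral_abscissa A = Max (Re ` spectrum A)"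

end

theory Submission
  imports Defs
begin


definition form :: "nat \<Rightarrow> (nat \<Rightarrow> nat \<Rightarrow> complex) \<Rightarrow> (nat \<Rightarrow> complex) \<Rightarrow> (nat \<Rightarrow> complex) \<Rightarrow> complex" where
  "form d Z x y = (\<Sum>a<d. \<Sum>b<d. cnj (x a) * Z a b * y b)"
definition mv :: "nat \<Rightarrow> complex mat \<Rightarrow> (nat \<Rightarrow> complex) \<Rightarrow> nat \<Rightarrow> complex" where
  "mv d K x = (\<lambda>a. \<Sum>b<d. K $$ (a,b) * x b)"
definition TT :: "nat \<Rightarrow> complex mat \<Rightarrow> (nat \<Rightarrow> nat \<Rightarrow> complex) \<Rightarrow> nat \<Rightarrow> nat \<Rightarrow> complex" where
  "TT d D Z = (\<lambda>i1 i2. \<Sum>j1<d. \<Sum>j2<d. D $$ (j1*d+j2, i1*d+i2) * Z j1 j2)"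

lemma idx_lt: "j1 < d \<Longrightarrow> j2 < (d::nat) \<Longrightarrow> j1*d+j2 < d*d"
proof -
  assume a: "j1 < d" "j2 < d"
  have "j1*d+j2 < Suc j1 * d" using a by simp
  also have "Suc j1 * d \<le> d * d" using a by (intro mult_le_mono1) simp
  finally show ?thesis .
qed

lemma idx_div: "j2 < (d::nat) \<Longrightarrow> (j1*d+j2) div d = j1" by simp
lemma idx_mod: "j2 < (d::nat) \<Longrightarrow> (j1*d+j2) mod d = j2" by simp

lemma msum_carrier: "\<forall>M\<in>set Ms. M \<in> carrier_mat n n \<Longrightarrow> msum n Ms \<in> carrier_mat n n"
  by (induction Ms) (auto simp: msum_def)

lemma msum_index: "\<forall>M\<in>set Ms. M \<in> carrier_mat n n \<Longrightarrow> i < n \<Longrightarrow> j < n \<Longrightarrow>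
   msum n Ms $$ (i,j) = sum_list (map (\<lambda>M. M $$ (i,j)) Ms)"
proof (induction Ms)
  case Nil then show ?case by (simp add: msum_def)
next
  case (Cons M Ms)
  have "msum n (M # Ms) = M + msum n Ms" by (simp add: msum_def)
  moreover have "msum n Ms \<in> carrier_mat n n" using Cons.prems by (intro msum_carrier) auto
  ultimately show ?case using Cons by auto
qed

lemma kron_carrier: "X \<in> carrier_mat d d \<Longrightarrow> Y \<in> carrier_mat d d \<Longrightarrow> kron X Y \<in> carrier_mat (d*d) (d*d)"
  by (simp add: kron_def)

lemma kron_index: "X \<in> carrier_mat d d \<Longrightarrow> Y \<in> carrier_mat d d \<Longrightarrow> i < d*d \<Longrightarrow> j < d*d \<Longrightarrow>
  kron X Y $$ (i,j) = X $$ (i div d, j div d) * Y $$ (i mod d, j mod d)"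
  by (simp add: kron_def)

lemma adjoint_index: "K \<in> carrier_mat d d \<Longrightarrow> a < d \<Longrightarrow> b < d \<Longrightarrow> mat_adjoint K $$ (a,b) = cnj (K $$ (b,a))"
  by (auto simp: mat_adjoint_def mat_of_rows_def cols_def)

lemma adjoint_carrier: "K \<in> carrier_mat d d \<Longrightarrow> mat_adjoint K \<in> carrier_mat d d"
  by (auto simp: mat_adjoint_def mat_of_rows_def cols_def)

lemma adj_mult_index: "K \<in> carrier_mat d d \<Longrightarrow> b < d \<Longrightarrow> c < d \<Longrightarrow>
  (mat_adjoint K * K) $$ (b,c) = (\<Sum>a<d. cnj (K $$ (a,b)) * K $$ (a,c))"
  using adjoint_carrier[of K d]
  by (auto simp: scalar_prod_def adjoint_index atLeast0LessThan intro!: sum.cong)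

lemma form_cong: "(\<And>a b. a < d \<Longrightarrow> b < d \<Longrightarrow> Z a b = Z' a b) \<Longrightarrow> form d Z x y = form d Z' x y"
  by (simp add: form_def)

lemma TT_kron: "X \<in> carrier_mat d d \<Longrightarrow> Y \<in> carrier_mat d d \<Longrightarrow> i1 < d \<Longrightarrow> i2 < d \<Longrightarrow>
  TT d (kron X Y) Z i1 i2 = (\<Sum>j1<d. \<Sum>j2<d. X $$ (j1,i1) * Y $$ (j2,i2) * Z j1 j2)"
  unfolding TT_def by (auto simp: kron_index idx_lt intro!: sum.cong)

lemma sum4_swap: "(\<Sum>i1\<in>A. \<Sum>i2\<in>B. \<Sum>j1\<in>C. \<Sum>j2\<in>E. f i1 i2 j1 j2) = (\<Sum>j1\<in>C. \<Sum>j2\<in>E. \<Sum>i1\<in>A. \<Sum>i2\<in>B. f i1 i2 j1 j2)"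
proof -
  have "(\<Sum>i1\<in>A. \<Sum>i2\<in>B. \<Sum>j1\<in>C. \<Sum>j2\<in>E. f i1 i2 j1 j2) = (\<Sum>i1\<in>A. \<Sum>j1\<in>C. \<Sum>i2\<in>B. \<Sum>j2\<in>E. f i1 i2 j1 j2)"
    by (rule sum.cong[OF refl], rule sum.swap)
  also have "\<dots> = (\<Sum>j1\<in>C. \<Sum>i1\<in>A. \<Sum>i2\<in>B. \<Sum>j2\<in>E. f i1 i2 j1 j2)" by (rule sum.swap)
  also have "\<dots> = (\<Sum>j1\<in>C. \<Sum>i1\<in>A. \<Sum>j2\<in>E. \<Sum>i2\<in>B. f i1 i2 j1 j2)"
    by (rule sum.cong[OF refl], rule sum.cong[OF refl], rule sum.swap)
  also have "\<dots> = (\<Sum>j1\<in>C. \<Sum>j2\<in>E. \<Sum>i1\<in>A. \<Sum>i2\<in>B. f i1 i2 j1 j2)"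
    by (rule sum.cong[OF refl], rule sum.swap)
  finally show ?thesis .
qed

lemma form_kron: "X \<in> carrier_mat d d \<Longrightarrow> Y \<in> carrier_mat d d \<Longrightarrow>
  form d (TT d (kron X Y) Z) x y = form d Z (mv d (mat_cnj X) x) (mv d Y y)"
proof -
  assume X: "X \<in> carrier_mat d d" and Y: "Y \<in> carrier_mat d d"
  have "form d (TT d (kron X Y) Z) x y = (\<Sum>i1<d. \<Sum>i2<d. cnj (x i1) * (\<Sum>j1<d. \<Sum>j2<d. X $$ (j1,i1) * Y $$ (j2,i2) * Z j1 j2) * y i2)"
    unfolding form_def using X Y by (auto simp: TT_kron intro!: sum.cong)
  also have "\<dots> = (\<Sum>i1<d. \<Sum>i2<d. \<Sum>j1<d. \<Sum>j2<d. cnj (x i1) * X $$ (j1,i1) * Y $$ (j2,i2) * Z j1 j2 * y i2)"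
    by (simp add: sum_distrib_left sum_distrib_right mult.assoc)
  also have "\<dots> = (\<Sum>j1<d. \<Sum>j2<d. \<Sum>i1<d. \<Sum>i2<d. cnj (x i1) * X $$ (j1,i1) * Y $$ (j2,i2) * Z j1 j2 * y i2)"
    by (rule sum4_swap)
  also have "\<dots> = form d Z (mv d (mat_cnj X) x) (mv d Y y)"
    unfolding form_def mv_def using X
    by (simp add: sum_distrib_left sum_distrib_right mat_cnj_def mult_ac)
  finally show ?thesis .
qed

lemma sum3_swap: "(\<Sum>a\<in>A. \<Sum>b\<in>B. \<Sum>c\<in>C. f a b c) = (\<Sum>b\<in>B. \<Sum>c\<in>C. \<Sum>a\<in>A. f a b c)"
proof -
  have "(\<Sum>a\<in>A. \<Sum>b\<in>B. \<Sum>c\<in>C. f a b c) = (\<Sum>b\<in>B. \<Sum>a\<in>A. \<Sum>c\<in>C. f a b c)" by (rule sum.swap)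
  also have "\<dots> = (\<Sum>b\<in>B. \<Sum>c\<in>C. \<Sum>a\<in>A. f a b c)" by (rule sum.cong[OF refl], rule sum.swap)
  finally show ?thesis .
qed

lemma delta_mult: "(if P then 1 else 0) * (z::complex) = (if P then z else 0)" "z * (if P then 1 else 0) = (if P then z else 0)"
  "cnj (if P then 1 else 0) = (if P then 1 else 0)"
  "(if P then (z::complex) else 0) * w = (if P then z*w else 0)"
  by auto

lemma sum_split_add: "(\<Sum>j<(m::nat)+n. (f j :: 'a::comm_monoid_add)) = (\<Sum>j<m. f j) + (\<Sum>j<n. f (m+j))"
  by (induction n) (auto simp: add.assoc)

lemma sum_split_dd: "(\<Sum>j<(n::nat)*d. (f j :: 'a::comm_monoid_add)) = (\<Sum>j1<n. \<Sum>j2<d. f (j1*d+j2))"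
proof (induction n)
  case (Suc n)
  have "Suc n * d = n*d + d" by simp
  then have "(\<Sum>j<Suc n*d. f j) = (\<Sum>j<n*d + d. f j)" by (simp only: \<open>Suc n * d = n*d + d\<close>)
  also have "\<dots> = (\<Sum>j<n*d. f j) + (\<Sum>j<d. f (n*d+j))" by (rule sum_split_add)
  also have "\<dots> = (\<Sum>j1<Suc n. \<Sum>j2<d. f (j1*d+j2))" using Suc.IH by simp
  finally show ?case .
qed simp

definition ee :: "nat \<Rightarrow> nat \<Rightarrow> complex" where "ee i = (\<lambda>a. if a = i then 1 else 0)"
definition ip :: "nat \<Rightarrow> (nat \<Rightarrow> complex) \<Rightarrow> (nat \<Rightarrow> complex) \<Rightarrow> complex" where
  "ip d x y = (\<Sum>a<d. cnj (x a) * y a)"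
definition nsq :: "nat \<Rightarrow> (nat \<Rightarrow> complex) \<Rightarrow> real" where
  "nsq d x = (\<Sum>a<d. (cmod (x a))\<^sup>2)"

lemma form_add_Z: "form d (\<lambda>a b. Z1 a b + Z2 a b) x y = form d Z1 x y + form d Z2 x y"
  by (simp add: form_def distrib_left distrib_right sum.distrib)
lemma form_scal_Z: "form d (\<lambda>a b. c * Z a b) x y = c * form d Z x y"
  by (simp add: form_def sum_distrib_left mult_ac)
lemma form_zero_Z: "form d (\<lambda>a b. 0) x y = 0"
  by (simp add: form_def)
lemma form_sum_list_Z: "form d (\<lambda>a b. sum_list (map (\<lambda>K. F K a b) Ks)) x y = sum_list (map (\<lambda>K. form d (F K) x y) Ks)"
  by (induction Ks) (auto simp: form_zero_Z form_add_Z)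
lemma form_add_l: "form d Z (\<lambda>a. u a + w a) y = form d Z u y + form d Z w y"
  by (simp add: form_def distrib_left distrib_right sum.distrib)
lemma form_add_r: "form d Z x (\<lambda>a. u a + w a) = form d Z x u + form d Z x w"
  by (simp add: form_def distrib_left distrib_right sum.distrib)
lemma form_scal_l: "form d Z (\<lambda>a. c * u a) y = cnj c * form d Z u y"
  by (simp add: form_def sum_distrib_left mult_ac)
lemma form_scal_r: "form d Z x (\<lambda>a. c * u a) = c * form d Z x u"
  by (simp add: form_def sum_distrib_left mult_ac)
lemma form_cong_v: "(\<And>a. a < d \<Longrightarrow> x a = x' a) \<Longrightarrow> (\<And>a. a < d \<Longrightarrow> y a = y' a) \<Longrightarrow> form d Z x y = form d Z x' y'"
  by (simp add: form_def)

lemma form_ee: "i < d \<Longrightarrow> j < d \<Longrightarrow> form d Z (ee i) (ee j) = Z i j"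
  by (simp add: form_def ee_def delta_mult mult.assoc)

lemma ip_mv: "ip d (mv d K x) (mv d L y) = form d (\<lambda>b c. \<Sum>a<d. cnj (K $$ (a,b)) * L $$ (a,c)) x y"
proof -
  have "ip d (mv d K x) (mv d L y) = (\<Sum>a<d. \<Sum>b<d. \<Sum>c<d. cnj (x b) * (cnj (K $$ (a,b)) * L $$ (a,c)) * y c)"
    by (simp add: ip_def mv_def sum_distrib_left sum_distrib_right mult_ac)
  also have "\<dots> = form d (\<lambda>b c. \<Sum>a<d. cnj (K $$ (a,b)) * L $$ (a,c)) x y"
    by (subst sum3_swap) (simp add: form_def sum_distrib_left sum_distrib_right mult_ac)
  finally show ?thesis .
qed

lemma ip_mv_l: "ip d (mv d K x) y = form d (\<lambda>b c. cnj (K $$ (c,b))) x y"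
  by (simp add: ip_def mv_def form_def sum_distrib_left sum_distrib_right mult_ac) (rule sum.swap)

lemma ip_mv_r: "ip d x (mv d K y) = form d (\<lambda>b c. K $$ (b,c)) x y"
  by (simp add: ip_def mv_def form_def sum_distrib_left sum_distrib_right mult_ac)

lemma ip_self: "ip d x x = of_real (nsq d x)"
  unfolding ip_def nsq_def of_real_sum by (intro sum.cong refl) (metis complex_norm_square mult.commute)

lemma form_delta: "form d (\<lambda>a b. if a = b then 1 else 0) x y = ip d x y"
  by (simp add: form_def ip_def delta_mult mult.assoc)

lemma form_delta_scal: "form d (\<lambda>a b. c * (if a = b then 1 else 0)) x y = c * ip d x y"
  by (simp add: form_scal_Z form_delta)

lemma ip_cnj: "ip d y x = cnj (ip d x y)"
  by (simp add: ip_def mult.commute)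

lemma TT_add: "D1 \<in> carrier_mat (d*d) (d*d) \<Longrightarrow> D2 \<in> carrier_mat (d*d) (d*d) \<Longrightarrow> i1 < d \<Longrightarrow> i2 < d \<Longrightarrow>
  TT d (D1 + D2) Z i1 i2 = TT d D1 Z i1 i2 + TT d D2 Z i1 i2"
  unfolding TT_def sum.distrib[symmetric] by (intro sum.cong refl) (auto simp: idx_lt distrib_right)

lemma TT_zero: "i1 < d \<Longrightarrow> i2 < d \<Longrightarrow> TT d (0\<^sub>m (d*d) (d*d)) Z i1 i2 = 0"
  unfolding TT_def by (intro sum.neutral ballI) (auto simp: idx_lt)

lemma TT_msum: "\<forall>M\<in>set Ms. M \<in> carrier_mat (d*d) (d*d) \<Longrightarrow> i1 < d \<Longrightarrow> i2 < d \<Longrightarrow>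
  TT d (msum (d*d) Ms) Z i1 i2 = sum_list (map (\<lambda>M. TT d M Z i1 i2) Ms)"
proof (induction Ms)
  case Nil then show ?case by (simp add: msum_def TT_zero)
next
  case (Cons M Ms)
  have "msum (d*d) (M # Ms) = M + msum (d*d) Ms" by (simp add: msum_def)
  moreover have c: "msum (d*d) Ms \<in> carrier_mat (d*d) (d*d)" using Cons.prems by (intro msum_carrier) auto
  moreover have "M \<in> carrier_mat (d*d) (d*d)" using Cons.prems by auto
  moreover have "TT d (msum (d*d) Ms) Z i1 i2 = sum_list (map (\<lambda>M. TT d M Z i1 i2) Ms)"
    using Cons.IH Cons.prems by auto
  ultimately show ?case using TT_add[OF _ c Cons.prems(2,3)] by simp
qed

lemma form_TT_add: "D1 \<in> carrier_mat (d*d) (d*d) \<Longrightarrow> D2 \<in> carrier_mat (d*d) (d*d) \<Longrightarrow>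
  form d (TT d (D1 + D2) Z) x y = form d (TT d D1 Z) x y + form d (TT d D2 Z) x y"
  by (subst form_add_Z[symmetric]) (rule form_cong, simp add: TT_add)

lemma form_TT_msum: "\<forall>B\<in>set Bs. F B \<in> carrier_mat (d*d) (d*d) \<Longrightarrow>
  form d (TT d (msum (d*d) (map F Bs)) Z) x y = sum_list (map (\<lambda>B. form d (TT d (F B) Z) x y) Bs)"
proof -
  assume a: "\<forall>B\<in>set Bs. F B \<in> carrier_mat (d*d) (d*d)"
  have "form d (TT d (msum (d*d) (map F Bs)) Z) x y = form d (\<lambda>i1 i2. sum_list (map (\<lambda>B. TT d (F B) Z i1 i2) Bs)) x y"
    by (rule form_cong) (use a in \<open>simp add: TT_msum o_def\<close>)
  also have "\<dots> = sum_list (map (\<lambda>B. form d (TT d (F B) Z) x y) Bs)"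
    by (rule form_sum_list_Z)
  finally show ?thesis .
qed

lemma mat_cnj_carrier: "X \<in> carrier_mat d d \<Longrightarrow> mat_cnj X \<in> carrier_mat d d"
  by (simp add: mat_cnj_def)
lemma mat_cnj_cnj: "mat_cnj (mat_cnj X) = X"
  by (auto simp: mat_cnj_def intro!: eq_matI)
lemma mat_cnj_one: "mat_cnj (1\<^sub>m d) = 1\<^sub>m d"
  by (auto simp: mat_cnj_def intro!: eq_matI)
lemma mv_one: "a < d \<Longrightarrow> mv d (1\<^sub>m d) x a = x a"
  by (simp add: mv_def delta_mult)

lemma form_D1:
  assumes A: "A \<in> carrier_mat d d" and Bs: "\<forall>B\<in>set Bs. B \<in> carrier_mat d d"
  shows "form d (TT d (kron (mat_cnj A) A + msum (d*d) (map (\<lambda>B. kron (mat_cnj B) B) Bs)) Z) x y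
    = form d Z (mv d A x) (mv d A y) + sum_list (map (\<lambda>B. form d Z (mv d B x) (mv d B y)) Bs)"
proof -
  have c1: "kron (mat_cnj A) A \<in> carrier_mat (d*d) (d*d)" using A by (simp add: kron_carrier mat_cnj_carrier)
  have c2: "\<forall>B\<in>set Bs. kron (mat_cnj B) B \<in> carrier_mat (d*d) (d*d)" using Bs by (simp add: kron_carrier mat_cnj_carrier)
  have c3: "msum (d*d) (map (\<lambda>B. kron (mat_cnj B) B) Bs) \<in> carrier_mat (d*d) (d*d)" using c2 by (intro msum_carrier) auto
  show ?thesis
    unfolding form_TT_add[OF c1 c3] form_TT_msum[OF c2]
    using A Bs by (simp add: form_kron mat_cnj_carrier mat_cnj_cnj cong: map_cong)
qed

lemma form_C:
  assumes A: "A \<in> carrier_mat d d" and Bs: "\<forall>B\<in>set Bs. B \<in> carrier_mat d d"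
  shows "form d (TT d (kron (mat_cnj A) (1\<^sub>m d) + kron (1\<^sub>m d) A + msum (d*d) (map (\<lambda>B. kron (mat_cnj B) B) Bs)) Z) x y
    = form d Z (mv d A x) y + form d Z x (mv d A y) + sum_list (map (\<lambda>B. form d Z (mv d B x) (mv d B y)) Bs)"
proof -
  have c1: "kron (mat_cnj A) (1\<^sub>m d) \<in> carrier_mat (d*d) (d*d)" using A by (simp add: kron_carrier mat_cnj_carrier)
  have c1': "kron (1\<^sub>m d) A \<in> carrier_mat (d*d) (d*d)" using A by (simp add: kron_carrier)
  have c2: "\<forall>B\<in>set Bs. kron (mat_cnj B) B \<in> carrier_mat (d*d) (d*d)" using Bs by (simp add: kron_carrier mat_cnj_carrier)
  have c3: "msum (d*d) (map (\<lambda>B. kron (mat_cnj B) B) Bs) \<in> carrier_mat (d*d) (d*d)" using c2 by (intro msum_carrier) auto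
  have e1: "form d Z (mv d A x) (mv d (1\<^sub>m d) y) = form d Z (mv d A x) y"
    by (rule form_cong_v) (auto simp: mv_one)
  have e2: "form d Z (mv d (1\<^sub>m d) x) (mv d A y) = form d Z x (mv d A y)"
    by (rule form_cong_v) (auto simp: mv_one)
  show ?thesis
    unfolding form_TT_add[OF add_carrier_mat[OF c1'] c3] form_TT_add[OF c1 c1'] form_TT_msum[OF c2]
    using A Bs e1 e2 by (simp add: form_kron mat_cnj_carrier mat_cnj_cnj mat_cnj_one cong: map_cong)
qed

lemma reshape:
  assumes D: "D \<in> carrier_mat (d*d) (d*d)" and v: "v \<in> carrier_vec (d*d)" and i: "i < d*d"
  shows "(transpose_mat D *\<^sub>v v) $ i = TT d D (\<lambda>a b. v $ (a*d+b)) (i div d) (i mod d)"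
proof -
  have ii: "i div d * d + i mod d = i" by simp
  have "(transpose_mat D *\<^sub>v v) $ i = (\<Sum>j<d*d. D $$ (j,i) * v $ j)"
    using D v i by (auto simp: scalar_prod_def atLeast0LessThan intro!: sum.cong)
  also have "\<dots> = (\<Sum>j1<d. \<Sum>j2<d. D $$ (j1*d+j2,i) * v $ (j1*d+j2))" by (rule sum_split_dd)
  also have "\<dots> = TT d D (\<lambda>a b. v $ (a*d+b)) (i div d) (i mod d)"
    unfolding TT_def ii ..
  finally show ?thesis .
qed

lemma eigen_TT:
  assumes D: "D \<in> carrier_mat (d*d) (d*d)" and ev: "eigenvector (transpose_mat D) v \<mu>"
    and i1: "i1 < d" and i2: "i2 < d"
  shows "TT d D (\<lambda>a b. v $ (a*d+b)) i1 i2 = \<mu> * v $ (i1*d+i2)"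
proof -
  from ev D have v: "v \<in> carrier_vec (d*d)" and eq: "transpose_mat D *\<^sub>v v = \<mu> \<cdot>\<^sub>v v"
    by (auto simp: eigenvector_def)
  have lt: "i1*d+i2 < d*d" using i1 i2 by (rule idx_lt)
  have "(transpose_mat D *\<^sub>v v) $ (i1*d+i2) = \<mu> * v $ (i1*d+i2)" using eq lt v by simp
  moreover have "(transpose_mat D *\<^sub>v v) $ (i1*d+i2) = TT d D (\<lambda>a b. v $ (a*d+b)) i1 i2"
    using reshape[OF D v lt] i2 by (simp add: idx_div idx_mod)
  ultimately show ?thesis by simp
qed

definition sZ :: "nat \<Rightarrow> (nat \<Rightarrow> nat \<Rightarrow> complex) \<Rightarrow> real" where
  "sZ d Z = Sup ((\<lambda>p. cmod (form d Z (fst p) (snd p))) ` {p. nsq d (fst p) = 1 \<and> nsq d (snd p) = 1})"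

lemma nsq_nonneg: "0 \<le> nsq d x" by (simp add: nsq_def sum_nonneg)

lemma unit_le1: "nsq d x = 1 \<Longrightarrow> a < d \<Longrightarrow> cmod (x a) \<le> 1"
proof -
  assume n: "nsq d x = 1" and a: "a < d"
  have "(cmod (x a))\<^sup>2 \<le> nsq d x" unfolding nsq_def by (rule member_le_sum) (use a in auto)
  then have "(cmod (x a))\<^sup>2 \<le> 1\<^sup>2" using n by simp
  then show ?thesis by (rule power2_le_imp_le) simp
qed

lemma form_bound: "nsq d x = 1 \<Longrightarrow> nsq d y = 1 \<Longrightarrow> cmod (form d Z x y) \<le> (\<Sum>a<d. \<Sum>b<d. cmod (Z a b))"
proof -
  assume x: "nsq d x = 1" and y: "nsq d y = 1"
  have "cmod (form d Z x y) \<le> (\<Sum>a<d. cmod (\<Sum>b<d. cnj (x a) * Z a b * y b))"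
    unfolding form_def by (rule norm_sum)
  also have "\<dots> \<le> (\<Sum>a<d. \<Sum>b<d. cmod (cnj (x a) * Z a b * y b))"
    by (intro sum_mono norm_sum)
  also have "\<dots> \<le> (\<Sum>a<d. \<Sum>b<d. cmod (Z a b))"
  proof (intro sum_mono)
    fix a b assume a: "a \<in> {..<d}" and b: "b \<in> {..<d}"
    have "cmod (x a) \<le> 1" "cmod (y b) \<le> 1" using unit_le1 x y a b by auto
    then show "cmod (cnj (x a) * Z a b * y b) \<le> cmod (Z a b)"
    proof -
      have "cmod (x a) * cmod (Z a b) * cmod (y b) \<le> 1 * cmod (Z a b) * 1"
        by (intro mult_mono) (use \<open>cmod (x a) \<le> 1\<close> \<open>cmod (y b) \<le> 1\<close> in auto)
      then show ?thesis by (simp add: norm_mult)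
    qed
  qed
  finally show ?thesis .
qed

lemma nsq_ee: "i < d \<Longrightarrow> nsq d (ee i) = 1"
proof -
  assume i: "i < d"
  have "nsq d (ee i) = (\<Sum>a<d. if a = i then 1 else 0)"
    unfolding nsq_def ee_def by (rule sum.cong) auto
  then show ?thesis using i by simp
qed

lemma sZ_bdd: "bdd_above ((\<lambda>p. cmod (form d Z (fst p) (snd p))) ` {p. nsq d (fst p) = 1 \<and> nsq d (snd p) = 1})"
  by (rule bdd_aboveI[of _ "\<Sum>a<d. \<Sum>b<d. cmod (Z a b)"]) (auto intro: form_bound)

lemma sZ_upper: "nsq d x = 1 \<Longrightarrow> nsq d y = 1 \<Longrightarrow> cmod (form d Z x y) \<le> sZ d Z"
  unfolding sZ_def by (rule cSup_upper[OF _ sZ_bdd]) (auto intro!: image_eqI[where x="(x,y)"])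

lemma sZ_least: "0 < d \<Longrightarrow> (\<And>x y. nsq d x = 1 \<Longrightarrow> nsq d y = 1 \<Longrightarrow> cmod (form d Z x y) \<le> r) \<Longrightarrow> sZ d Z \<le> r"
  unfolding sZ_def
  by (rule cSup_least) (auto intro!: image_eqI[where x="(ee 0, ee 0)"] exI[where x="ee 0"] simp: nsq_ee)

lemma sZ_nonneg: "0 < d \<Longrightarrow> 0 \<le> sZ d Z"
  using sZ_upper[of d "ee 0" "ee 0" Z] nsq_ee[of 0 d] by (meson norm_ge_zero order_trans)

lemma sZ_pos: "0 < d \<Longrightarrow> a < d \<Longrightarrow> b < d \<Longrightarrow> Z a b \<noteq> 0 \<Longrightarrow> 0 < sZ d Z"
proof -
  assume "0 < d" "a < d" "b < d" "Z a b \<noteq> 0"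
  then have "cmod (Z a b) \<le> sZ d Z" using sZ_upper[of d "ee a" "ee b" Z] nsq_ee[of a d] nsq_ee[of b d] form_ee[of a d b Z]
    by simp
  moreover have "0 < cmod (Z a b)" using \<open>Z a b \<noteq> 0\<close> by simp
  ultimately show ?thesis by linarith
qed

lemma amgm: "0 \<le> a \<Longrightarrow> 0 \<le> (b::real) \<Longrightarrow> sqrt a * sqrt b \<le> (a + b) / 2"
  using arith_geo_mean_sqrt[of a b] by (simp add: real_sqrt_mult)

lemma form_zero_l: "form d Z (\<lambda>a. 0) w = 0" by (simp add: form_def)
lemma form_zero_r: "form d Z u (\<lambda>a. 0) = 0" by (simp add: form_def)

lemma nsq_zero: "nsq d u = 0 \<Longrightarrow> a < d \<Longrightarrow> u a = 0"
  unfolding nsq_def by (subst (asm) sum_nonneg_eq_0_iff) auto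

lemma unit_scale:
  assumes p: "p = sqrt (nsq d u)" and pp: "0 < p"
  shows "nsq d (\<lambda>a. u a / of_real p) = 1" and "u = (\<lambda>a. of_real p * (u a / of_real p))"
proof -
  have "nsq d (\<lambda>a. u a / of_real p) = nsq d u / p\<^sup>2"
    unfolding nsq_def by (simp add: norm_divide power_divide sum_divide_distrib[symmetric])
  also have "p\<^sup>2 = nsq d u" using p nsq_nonneg[of d u] by simp
  finally show "nsq d (\<lambda>a. u a / of_real p) = 1" using pp p by simp
  show "u = (\<lambda>a. of_real p * (u a / of_real p))" using pp by auto
qed

lemma sZ_scale: assumes d: "0 < d"
  shows "cmod (form d Z u w) \<le> sZ d Z * sqrt (nsq d u) * sqrt (nsq d w)"
proof (cases "nsq d u = 0 \<or> nsq d w = 0")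
  case True
  have "form d Z u w = 0"
  proof (cases "nsq d u = 0")
    case True
    then have "form d Z u w = form d Z (\<lambda>a. 0) w" by (intro form_cong_v) (auto simp: nsq_zero)
    then show ?thesis by (simp add: form_zero_l)
  next
    case False
    then have "nsq d w = 0" using \<open>nsq d u = 0 \<or> nsq d w = 0\<close> by auto
    then have "form d Z u w = form d Z u (\<lambda>a. 0)" by (intro form_cong_v) (auto simp: nsq_zero)
    then show ?thesis by (simp add: form_zero_r)
  qed
  moreover have "0 \<le> sZ d Z * sqrt (nsq d u) * sqrt (nsq d w)"
    by (intro mult_nonneg_nonneg real_sqrt_ge_zero nsq_nonneg sZ_nonneg[OF d])
  ultimately show ?thesis by simp
next
  case False
  define p where "p = sqrt (nsq d u)"
  define q where "q = sqrt (nsq d w)"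
  have pp: "0 < p" using False nsq_nonneg[of d u] unfolding p_def by simp
  have qp: "0 < q" using False nsq_nonneg[of d w] unfolding q_def by simp
  note U = unit_scale[OF p_def pp] and W = unit_scale[OF q_def qp]
  have "form d Z u w = form d Z (\<lambda>a. of_real p * (u a / of_real p)) (\<lambda>a. of_real q * (w a / of_real q))"
    using U(2) W(2) by metis
  also have "\<dots> = of_real p * of_real q * form d Z (\<lambda>a. u a / of_real p) (\<lambda>a. w a / of_real q)"
    by (simp only: form_scal_l form_scal_r complex_cnj_complex_of_real mult.assoc)
  finally have "cmod (form d Z u w) = p * q * cmod (form d Z (\<lambda>a. u a / of_real p) (\<lambda>a. w a / of_real q))"
    using pp qp by (simp add: norm_mult)
  also have "\<dots> \<le> p * q * sZ d Z"
    using sZ_upper[OF U(1) W(1), of Z] pp qp by simp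
  finally show ?thesis unfolding p_def q_def by (simp add: mult_ac)
qed

lemma sZ_pairs: assumes d: "0 < d"
  shows "cmod (sum_list (map (\<lambda>(u,w). form d Z u w) ps)) \<le> sZ d Z * sum_list (map (\<lambda>(u,w). nsq d u + nsq d w) ps) / 2"
proof (induction ps)
  case Nil then show ?case by simp
next
  case (Cons p ps)
  obtain u w where p: "p = (u,w)" by force
  have s0: "0 \<le> sZ d Z" using sZ_nonneg[OF d] .
  have "cmod (sum_list (map (\<lambda>(u,w). form d Z u w) (p # ps))) \<le> cmod (form d Z u w) + cmod (sum_list (map (\<lambda>(u,w). form d Z u w) ps))"
    using p by (simp add: norm_triangle_ineq)
  also have "\<dots> \<le> sZ d Z * sqrt (nsq d u) * sqrt (nsq d w) + sZ d Z * sum_list (map (\<lambda>(u,w). nsq d u + nsq d w) ps) / 2"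
    using sZ_scale[OF d, of Z u w] Cons.IH by linarith
  also have "sZ d Z * sqrt (nsq d u) * sqrt (nsq d w) \<le> sZ d Z * ((nsq d u + nsq d w) / 2)"
    unfolding mult.assoc by (rule mult_left_mono[OF amgm[OF nsq_nonneg nsq_nonneg] s0])
  finally show ?case using p by (simp add: algebra_simps add_divide_distrib)
qed

lemma sZ_mult_le: assumes d: "0 < d" and k: "0 \<le> k"
  and h: "\<And>x y. nsq d x = 1 \<Longrightarrow> nsq d y = 1 \<Longrightarrow> k * cmod (form d Z x y) \<le> r"
  shows "k * sZ d Z \<le> r"
proof (cases "k = 0")
  case True
  have "k * cmod (form d Z (ee 0) (ee 0)) \<le> r" using h nsq_ee[OF d] by blast
  then show ?thesis using True by simp
next
  case False
  then have kp: "0 < k" using k by simp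
  have "sZ d Z \<le> r / k"
    by (rule sZ_least[OF d]) (use h kp in \<open>simp add: pos_le_divide_eq mult.commute\<close>)
  then show ?thesis using kp by (simp add: pos_le_divide_eq mult.commute)
qed

lemma of_real_sum_list: "complex_of_real (sum_list (map f xs)) = sum_list (map (\<lambda>x. complex_of_real (f x)) xs)"
  by (induction xs) auto

lemma ip_ee: "i < d \<Longrightarrow> j < d \<Longrightarrow> ip d (ee i) (ee j) = (if i = j then 1 else 0)"
  by (simp add: ip_def ee_def delta_mult)

lemma TT_cong: "(\<And>a b. a < d \<Longrightarrow> b < d \<Longrightarrow> Z a b = Z' a b) \<Longrightarrow> TT d D Z i1 i2 = TT d D Z' i1 i2"
  by (simp add: TT_def)

lemma spectrum_transpose: "(D :: complex mat) \<in> carrier_mat n n \<Longrightarrow> spectrum (transpose_mat D) = spectrum D"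
  using spectrum_root_char_poly[of D n] spectrum_root_char_poly[of "transpose_mat D" n] by simp

lemma eig_obtain:
  assumes D: "D \<in> carrier_mat (d*d) (d*d)" and d: "0 < d" and mu: "\<mu> \<in> spectrum D"
  shows "\<exists>Z a b. a < d \<and> b < d \<and> Z a b \<noteq> 0 \<and> (\<forall>x y. form d (TT d D Z) x y = \<mu> * form d Z x y)"
proof -
  from mu spectrum_transpose[OF D] have "\<mu> \<in> spectrum (transpose_mat D)" by simp
  then have "eigenvalue (transpose_mat D) \<mu>" by (simp add: spectrum_def)
  then obtain v where ev: "eigenvector (transpose_mat D) v \<mu>" by (auto simp: eigenvalue_def)
  then have v: "v \<in> carrier_vec (d*d)" "v \<noteq> 0\<^sub>v (d*d)" using D by (auto simp: eigenvector_def)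
  have "\<exists>i<d*d. v $ i \<noteq> 0"
  proof (rule ccontr)
    assume "\<not> (\<exists>i<d*d. v $ i \<noteq> 0)"
    then have "v = 0\<^sub>v (d*d)" using v(1) by (intro eq_vecI) auto
    with v(2) show False by simp
  qed
  then obtain i where i: "i < d*d" "v $ i \<noteq> 0" by blast
  define Z where "Z = (\<lambda>a b. v $ (a*d+b))"
  have a: "i div d < d" using i(1) d by (simp add: less_mult_imp_div_less)
  have b: "i mod d < d" using d by simp
  have "Z (i div d) (i mod d) \<noteq> 0" using i unfolding Z_def by simp
  moreover have "\<forall>x y. form d (TT d D Z) x y = \<mu> * form d Z x y"
  proof (intro allI)
    fix x y
    have "form d (TT d D Z) x y = form d (\<lambda>a b. \<mu> * Z a b) x y"
      by (rule form_cong) (simp add: Z_def eigen_TT[OF D ev])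
    then show "form d (TT d D Z) x y = \<mu> * form d Z x y" by (simp add: form_scal_Z)
  qed
  ultimately show ?thesis using a b by blast
qed

lemma attain:
  assumes D: "D \<in> carrier_mat (d*d) (d*d)" and d: "0 < d"
    and h: "\<And>i1 i2. i1 < d \<Longrightarrow> i2 < d \<Longrightarrow> form d (TT d D (\<lambda>a b. if a = b then 1 else 0)) (ee i1) (ee i2) = \<beta> * ip d (ee i1) (ee i2)"
  shows "\<beta> \<in> spectrum D"
proof -
  define v where "v = vec (d*d) (\<lambda>i. if i div d = i mod d then 1 else (0::complex))"
  have vc: "v \<in> carrier_vec (d*d)" by (simp add: v_def)
  have v0: "v \<noteq> 0\<^sub>v (d*d)"
  proof
    assume "v = 0\<^sub>v (d*d)"
    then have "v $ 0 = 0" using d by simp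
    moreover have "v $ 0 = 1" using d by (simp add: v_def)
    ultimately show False by simp
  qed
  have "transpose_mat D *\<^sub>v v = \<beta> \<cdot>\<^sub>v v"
  proof (rule eq_vecI)
    fix i assume "i < dim_vec (\<beta> \<cdot>\<^sub>v v)"
    then have i: "i < d*d" by (simp add: v_def)
    have a: "i div d < d" using i d by (simp add: less_mult_imp_div_less)
    have b: "i mod d < d" using d by simp
    have "(transpose_mat D *\<^sub>v v) $ i = TT d D (\<lambda>a b. v $ (a*d+b)) (i div d) (i mod d)"
      by (rule reshape[OF D vc i])
    also have "\<dots> = TT d D (\<lambda>a b. if a = b then 1 else 0) (i div d) (i mod d)"
      by (rule TT_cong) (simp add: v_def idx_lt idx_div idx_mod)
    also have "\<dots> = form d (TT d D (\<lambda>a b. if a = b then 1 else 0)) (ee (i div d)) (ee (i mod d))"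
      using a b by (simp add: form_ee)
    also have "\<dots> = \<beta> * (if i div d = i mod d then 1 else 0)"
      using h[OF a b] a b by (simp add: ip_ee)
    also have "\<dots> = (\<beta> \<cdot>\<^sub>v v) $ i" using i by (simp add: v_def)
    finally show "(transpose_mat D *\<^sub>v v) $ i = (\<beta> \<cdot>\<^sub>v v) $ i" .
  qed (use D in \<open>simp add: v_def\<close>)
  then have "eigenvector (transpose_mat D) v \<beta>" using vc v0 D by (simp add: eigenvector_def)
  then have "\<beta> \<in> spectrum (transpose_mat D)" by (auto simp: spectrum_def eigenvalue_def)
  then show ?thesis using spectrum_transpose[OF D] by simp
qed



lemma ip_self_sym: "complex_of_real (nsq d u) = ip d u u" by (simp add: ip_self)

lemma sum_list_nonneg_real: "(\<And>x. x \<in> set xs \<Longrightarrow> 0 \<le> f x) \<Longrightarrow> 0 \<le> sum_list (map (f::_\<Rightarrow>real) xs)"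
  by (induction xs) auto

lemma part1:
  assumes d: "0 < d" and A: "A \<in> carrier_mat d d" and Bs: "\<forall>B\<in>set Bs. B \<in> carrier_mat d d"
    and N: "mat_adjoint A * A + msum d (map (\<lambda>B. mat_adjoint B * B) Bs) = \<beta> \<cdot>\<^sub>m 1\<^sub>m d"
  shows "spectral_radius (kron (mat_cnj A) A + msum (d*d) (map (\<lambda>B. kron (mat_cnj B) B) Bs)) = Re \<beta> \<and> Im \<beta> = 0"
proof -
  define Ks where "Ks = A # Bs"
  have Ks: "\<forall>K\<in>set Ks. K \<in> carrier_mat d d" using A Bs by (simp add: Ks_def)
  define D where "D = kron (mat_cnj A) A + msum (d*d) (map (\<lambda>B. kron (mat_cnj B) B) Bs)"
  have c2: "\<forall>B\<in>set Bs. kron (mat_cnj B) B \<in> carrier_mat (d*d) (d*d)" using Bs by (simp add: kron_carrier mat_cnj_carrier)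
  have Dc: "D \<in> carrier_mat (d*d) (d*d)" unfolding D_def
    using msum_carrier[of "map (\<lambda>B. kron (mat_cnj B) B) Bs"] c2 by auto
  have kraus: "\<And>Z x y. form d (TT d D Z) x y = sum_list (map (\<lambda>K. form d Z (mv d K x) (mv d K y)) Ks)"
    unfolding D_def Ks_def using form_D1[OF A Bs] by simp
  have Nent: "\<And>b c. b < d \<Longrightarrow> c < d \<Longrightarrow> sum_list (map (\<lambda>K. (mat_adjoint K * K) $$ (b,c)) Ks) = \<beta> * (if b = c then 1 else 0)"
  proof -
    fix b c assume b: "b < d" and c: "c < d"
    have cB: "\<forall>M\<in>set (map (\<lambda>B. mat_adjoint B * B) Bs). M \<in> carrier_mat d d"
      using Bs by (auto intro!: mult_carrier_mat adjoint_carrier)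
    have cA: "mat_adjoint A * A \<in> carrier_mat d d" using A by (auto intro!: mult_carrier_mat adjoint_carrier)
    have "(\<beta> \<cdot>\<^sub>m 1\<^sub>m d) $$ (b,c) = \<beta> * (if b = c then 1 else 0)" using b c by simp
    moreover have "(mat_adjoint A * A + msum d (map (\<lambda>B. mat_adjoint B * B) Bs)) $$ (b,c)
       = (mat_adjoint A * A) $$ (b,c) + msum d (map (\<lambda>B. mat_adjoint B * B) Bs) $$ (b,c)"
      using b c msum_carrier[OF cB] by simp
    moreover have "msum d (map (\<lambda>B. mat_adjoint B * B) Bs) $$ (b,c) = sum_list (map (\<lambda>B. (mat_adjoint B * B) $$ (b,c)) Bs)"
      using msum_index[OF cB b c] by (simp add: o_def)
    ultimately show "sum_list (map (\<lambda>K. (mat_adjoint K * K) $$ (b,c)) Ks) = \<beta> * (if b = c then 1 else 0)"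
      using N by (simp add: Ks_def)
  qed
  have Nip: "\<And>x y. sum_list (map (\<lambda>K. ip d (mv d K x) (mv d K y)) Ks) = \<beta> * ip d x y"
  proof -
    fix x y
    have "sum_list (map (\<lambda>K. ip d (mv d K x) (mv d K y)) Ks) = sum_list (map (\<lambda>K. form d (\<lambda>b c. (mat_adjoint K * K) $$ (b,c)) x y) Ks)"
    proof (intro arg_cong[where f=sum_list] map_cong refl)
      fix K assume "K \<in> set Ks"
      then have K: "K \<in> carrier_mat d d" using Ks by auto
      show "ip d (mv d K x) (mv d K y) = form d (\<lambda>b c. (mat_adjoint K * K) $$ (b,c)) x y"
        unfolding ip_mv by (rule form_cong) (simp add: adj_mult_index[OF K])
    qed
    also have "\<dots> = form d (\<lambda>b c. sum_list (map (\<lambda>K. (mat_adjoint K * K) $$ (b,c)) Ks)) x y"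
      by (rule form_sum_list_Z[symmetric])
    also have "\<dots> = form d (\<lambda>b c. \<beta> * (if b = c then 1 else 0)) x y"
      by (rule form_cong) (simp add: Nent)
    also have "\<dots> = \<beta> * ip d x y" by (rule form_delta_scal)
    finally show "sum_list (map (\<lambda>K. ip d (mv d K x) (mv d K y)) Ks) = \<beta> * ip d x y" .
  qed
  define S where "S = (\<lambda>x. sum_list (map (\<lambda>K. nsq d (mv d K x)) Ks))"
  have nsqsum: "\<And>x. complex_of_real (S x) = \<beta> * of_real (nsq d x)"
    unfolding S_def of_real_sum_list ip_self_sym using Nip by simp
  have S1: "\<And>x. nsq d x = 1 \<Longrightarrow> S x = Re \<beta>"
    using nsqsum by (metis Re_complex_of_real mult.right_neutral of_real_1)
  have e0: "nsq d (ee 0) = 1" using d by (simp add: nsq_ee)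
  have imb: "Im \<beta> = 0" using nsqsum[of "ee 0"] e0 by (metis Im_complex_of_real mult.right_neutral of_real_1)
  have reb: "0 \<le> Re \<beta>" using S1[OF e0] unfolding S_def
    by (metis nsq_nonneg sum_list_nonneg_real)
  have upper: "cmod \<mu> \<le> Re \<beta>" if mu: "\<mu> \<in> spectrum D" for \<mu>
  proof -
    obtain Z a b where ab: "a < d" "b < d" "Z a b \<noteq> 0" and eig: "\<forall>x y. form d (TT d D Z) x y = \<mu> * form d Z x y"
      using eig_obtain[OF Dc d mu] by blast
    have "cmod \<mu> * sZ d Z \<le> sZ d Z * Re \<beta>"
    proof (rule sZ_mult_le[OF d norm_ge_zero])
      fix x y assume x: "nsq d x = 1" and y: "nsq d y = 1"
      have "cmod \<mu> * cmod (form d Z x y) = cmod (sum_list (map (\<lambda>(u,w). form d Z u w) (map (\<lambda>K. (mv d K x, mv d K y)) Ks)))"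
        using eig kraus by (simp add: norm_mult o_def)
      also have "\<dots> \<le> sZ d Z * sum_list (map (\<lambda>(u,w). nsq d u + nsq d w) (map (\<lambda>K. (mv d K x, mv d K y)) Ks)) / 2"
        by (rule sZ_pairs[OF d])
      also have "sum_list (map (\<lambda>(u,w). nsq d u + nsq d w) (map (\<lambda>K. (mv d K x, mv d K y)) Ks)) = S x + S y"
        unfolding S_def by (simp add: o_def sum_list_addf)
      finally show "cmod \<mu> * cmod (form d Z x y) \<le> sZ d Z * Re \<beta>" using S1[OF x] S1[OF y] by simp
    qed
    moreover have "0 < sZ d Z" by (rule sZ_pos[of d a b Z, OF d ab(1) ab(2) ab(3)])
    ultimately show ?thesis by (simp add: mult.commute)
  qed
  have att: "\<beta> \<in> spectrum D"
  proof (rule attain[OF Dc d])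
    fix i1 i2 assume "i1 < d" "i2 < d"
    show "form d (TT d D (\<lambda>a b. if a = b then 1 else 0)) (ee i1) (ee i2) = \<beta> * ip d (ee i1) (ee i2)"
      unfolding kraus form_delta Nip ..
  qed
  have "spectral_radius D = Re \<beta>"
    unfolding spectral_radius_def
  proof (rule Max_eqI)
    show "finite (norm ` spectrum D)" using card_finite_spectrum(1)[OF Dc] by simp
    show "y \<le> Re \<beta>" if "y \<in> norm ` spectrum D" for y using that upper by auto
    have "norm \<beta> = Re \<beta>" using imb reb by (simp add: cmod_eq_Re)
    then show "Re \<beta> \<in> norm ` spectrum D" using att by force
  qed
  then show ?thesis using imb unfolding D_def by simp
qed

lemma ip_as_form: "ip d u w = form d (\<lambda>a b. if a = b then 1 else 0) u w" by (simp add: form_delta)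

lemma nsqA_bound:
  assumes x: "nsq d x = 1"
  shows "nsq d (mv d A x) \<le> (\<Sum>a<d. (\<Sum>b<d. cmod (A $$ (a,b)))\<^sup>2)"
  unfolding nsq_def
proof (rule sum_mono)
  fix a assume "a \<in> {..<d}"
  have "cmod (mv d A x a) \<le> (\<Sum>b<d. cmod (A $$ (a,b) * x b))" unfolding mv_def by (rule norm_sum)
  also have "\<dots> \<le> (\<Sum>b<d. cmod (A $$ (a,b)))"
  proof (rule sum_mono)
    fix b assume "b \<in> {..<d}"
    then have "cmod (x b) \<le> 1" using unit_le1[OF x] by auto
    then show "cmod (A $$ (a,b) * x b) \<le> cmod (A $$ (a,b))"
      by (simp add: norm_mult mult_left_le)
  qed
  finally show "(cmod (mv d A x a))\<^sup>2 \<le> (\<Sum>b<d. cmod (A $$ (a,b)))\<^sup>2"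
    by (intro power_mono) auto
qed

lemma part2:
  assumes d: "0 < d" and A: "A \<in> carrier_mat d d" and Bs: "\<forall>B\<in>set Bs. B \<in> carrier_mat d d"
    and M: "A + mat_adjoint A + msum d (map (\<lambda>B. mat_adjoint B * B) Bs) = \<beta> \<cdot>\<^sub>m 1\<^sub>m d"
  shows "spectral_abscissa (kron (mat_cnj A) (1\<^sub>m d) + kron (1\<^sub>m d) A + msum (d*d) (map (\<lambda>B. kron (mat_cnj B) B) Bs)) = Re \<beta> \<and> Im \<beta> = 0"
proof -
  define D where "D = kron (mat_cnj A) (1\<^sub>m d) + kron (1\<^sub>m d) A + msum (d*d) (map (\<lambda>B. kron (mat_cnj B) B) Bs)"
  have c2: "\<forall>B\<in>set Bs. kron (mat_cnj B) B \<in> carrier_mat (d*d) (d*d)" using Bs by (simp add: kron_carrier mat_cnj_carrier)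
  have Dc: "D \<in> carrier_mat (d*d) (d*d)" unfolding D_def
    using msum_carrier[of "map (\<lambda>B. kron (mat_cnj B) B) Bs"] c2 by auto
  have kraus: "\<And>Z x y. form d (TT d D Z) x y = form d Z (mv d A x) y + form d Z x (mv d A y) + sum_list (map (\<lambda>B. form d Z (mv d B x) (mv d B y)) Bs)"
    unfolding D_def using form_C[OF A Bs] by simp
  have Ment: "\<And>b c. b < d \<Longrightarrow> c < d \<Longrightarrow> A $$ (b,c) + cnj (A $$ (c,b)) + sum_list (map (\<lambda>B. (mat_adjoint B * B) $$ (b,c)) Bs) = \<beta> * (if b = c then 1 else 0)"
  proof -
    fix b c assume b: "b < d" and c: "c < d"
    have cB: "\<forall>M\<in>set (map (\<lambda>B. mat_adjoint B * B) Bs). M \<in> carrier_mat d d"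
      using Bs by (auto intro!: mult_carrier_mat adjoint_carrier)
    have "(\<beta> \<cdot>\<^sub>m 1\<^sub>m d) $$ (b,c) = \<beta> * (if b = c then 1 else 0)" using b c by simp
    moreover have "(A + mat_adjoint A + msum d (map (\<lambda>B. mat_adjoint B * B) Bs)) $$ (b,c)
       = A $$ (b,c) + mat_adjoint A $$ (b,c) + msum d (map (\<lambda>B. mat_adjoint B * B) Bs) $$ (b,c)"
      using b c msum_carrier[OF cB] A adjoint_carrier[OF A] by simp
    moreover have "msum d (map (\<lambda>B. mat_adjoint B * B) Bs) $$ (b,c) = sum_list (map (\<lambda>B. (mat_adjoint B * B) $$ (b,c)) Bs)"
      using msum_index[OF cB b c] by (simp add: o_def)
    moreover have "mat_adjoint A $$ (b,c) = cnj (A $$ (c,b))" using adjoint_index[OF A b c] .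
    ultimately show "A $$ (b,c) + cnj (A $$ (c,b)) + sum_list (map (\<lambda>B. (mat_adjoint B * B) $$ (b,c)) Bs) = \<beta> * (if b = c then 1 else 0)"
      using M by simp
  qed
  have Mip: "\<And>x y. ip d (mv d A x) y + ip d x (mv d A y) + sum_list (map (\<lambda>B. ip d (mv d B x) (mv d B y)) Bs) = \<beta> * ip d x y"
  proof -
    fix x y
    have "sum_list (map (\<lambda>B. ip d (mv d B x) (mv d B y)) Bs) = sum_list (map (\<lambda>B. form d (\<lambda>b c. (mat_adjoint B * B) $$ (b,c)) x y) Bs)"
    proof (intro arg_cong[where f=sum_list] map_cong refl)
      fix K assume "K \<in> set Bs"
      then have K: "K \<in> carrier_mat d d" using Bs by auto
      show "ip d (mv d K x) (mv d K y) = form d (\<lambda>b c. (mat_adjoint K * K) $$ (b,c)) x y"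
        unfolding ip_mv by (rule form_cong) (simp add: adj_mult_index[OF K])
    qed
    also have "\<dots> = form d (\<lambda>b c. sum_list (map (\<lambda>K. (mat_adjoint K * K) $$ (b,c)) Bs)) x y"
      by (rule form_sum_list_Z[symmetric])
    finally have e3: "sum_list (map (\<lambda>B. ip d (mv d B x) (mv d B y)) Bs) = \<dots>" .
    have "ip d (mv d A x) y + ip d x (mv d A y) + sum_list (map (\<lambda>B. ip d (mv d B x) (mv d B y)) Bs)
      = form d (\<lambda>b c. cnj (A $$ (c,b)) + A $$ (b,c) + sum_list (map (\<lambda>B. (mat_adjoint B * B) $$ (b,c)) Bs)) x y"
      unfolding form_add_Z by (subst e3) (simp only: ip_mv_l ip_mv_r)
    also have "\<dots> = form d (\<lambda>b c. \<beta> * (if b = c then 1 else 0)) x y"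
      by (rule form_cong) (subst add.commute[of "cnj _"], simp add: Ment)
    also have "\<dots> = \<beta> * ip d x y" by (rule form_delta_scal)
    finally show "ip d (mv d A x) y + ip d x (mv d A y) + sum_list (map (\<lambda>B. ip d (mv d B x) (mv d B y)) Bs) = \<beta> * ip d x y" .
  qed
  have e0: "nsq d (ee 0) = 1" using d by (simp add: nsq_ee)
  have imb: "Im \<beta> = 0"
  proof -
    let ?u = "mv d A (ee 0)"
    have "\<beta> = ip d ?u (ee 0) + cnj (ip d ?u (ee 0)) + complex_of_real (sum_list (map (\<lambda>B. nsq d (mv d B (ee 0))) Bs))"
      using Mip[of "ee 0" "ee 0"] ip_cnj[of d ?u "ee 0"] ip_self_sym[of d "ee 0"] e0
      by (simp add: of_real_sum_list ip_self_sym o_def)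
    then show ?thesis by simp
  qed
  define c where "c = (\<Sum>a<d. (\<Sum>b<d. cmod (A $$ (a,b)))\<^sup>2)"
  have c0: "0 \<le> c" unfolding c_def by (intro sum_nonneg) auto
  have upper: "Re \<mu> \<le> Re \<beta>" if mu: "\<mu> \<in> spectrum D" for \<mu>
  proof -
    obtain Z a b where ab: "a < d" "b < d" "Z a b \<noteq> 0" and eig: "\<forall>x y. form d (TT d D Z) x y = \<mu> * form d Z x y"
      using eig_obtain[OF Dc d mu] by blast
    have sp: "0 < sZ d Z" by (rule sZ_pos[of d a b Z, OF d ab(1) ab(2) ab(3)])
    have key: "Re \<mu> \<le> Re \<beta> + 2 * t * c" if t: "0 < t" for t
    proof -
      define R where "R = 1 + t * Re \<beta> + 2 * t\<^sup>2 * c"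
      have "cmod (1 + of_real t * \<mu>) * sZ d Z \<le> sZ d Z * R"
      proof (rule sZ_mult_le[OF d norm_ge_zero])
        fix x y assume x: "nsq d x = 1" and y: "nsq d y = 1"
        define ux where "ux = (\<lambda>a. x a + of_real t * mv d A x a)"
        define uy where "uy = (\<lambda>a. y a + of_real t * mv d A y a)"
        define bx where "bx = (\<lambda>B a. of_real (sqrt t) * mv d B x a)"
        define by' where "by' = (\<lambda>B a. of_real (sqrt t) * mv d B y a)"
        define ps where "ps = (ux, uy) # map (\<lambda>B. (bx B, by' B)) Bs"
        have st: "complex_of_real (sqrt t) * complex_of_real (sqrt t) = of_real t"
          by (subst of_real_mult[symmetric]) (use t in simp)
        have E1: "form d Z ux uy = form d Z x y + of_real t * form d Z (mv d A x) y + of_real t * form d Z x (mv d A y) + of_real t * of_real t * form d Z (mv d A x) (mv d A y)"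
          unfolding ux_def uy_def form_add_l form_add_r form_scal_l form_scal_r complex_cnj_complex_of_real
          by (simp add: algebra_simps)
        have E2: "form d Z (bx B) (by' B) = of_real t * form d Z (mv d B x) (mv d B y)" for B
          unfolding bx_def by'_def form_scal_l form_scal_r complex_cnj_complex_of_real
          using st by (simp add: mult.assoc[symmetric])
        have E3: "\<mu> * form d Z x y = form d Z (mv d A x) y + form d Z x (mv d A y) + sum_list (map (\<lambda>B. form d Z (mv d B x) (mv d B y)) Bs)"
          using eig kraus[of Z x y] by simp
        have sumps: "sum_list (map (\<lambda>(u,w). form d Z u w) ps) = form d Z ux uy + of_real t * sum_list (map (\<lambda>B. form d Z (mv d B x) (mv d B y)) Bs)"
          unfolding ps_def by (simp add: o_def E2 sum_list_const_mult)
        have decomp: "(1 + of_real t * \<mu>) * form d Z x y = sum_list (map (\<lambda>(u,w). form d Z u w) ps) - of_real t * of_real t * form d Z (mv d A x) (mv d A y)"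
        proof -
          have "(1 + of_real t * \<mu>) * form d Z x y = form d Z x y + of_real t * (\<mu> * form d Z x y)"
            by (simp add: algebra_simps)
          also have "\<dots> = sum_list (map (\<lambda>(u,w). form d Z u w) ps) - of_real t * of_real t * form d Z (mv d A x) (mv d A y)"
            unfolding E3 sumps E1 by (simp add: algebra_simps)
          finally show ?thesis .
        qed
        have nsqu: "nsq d ux + sum_list (map (\<lambda>B. nsq d (bx B)) Bs) = 1 + t * Re \<beta> + t\<^sup>2 * nsq d (mv d A x)"
          if ux_def: "ux = (\<lambda>a. x a + of_real t * mv d A x a)" and bx_def: "bx = (\<lambda>B a. of_real (sqrt t) * mv d B x a)"
            and x: "nsq d x = 1" for x ux bx
        proof -
          have i1: "ip d ux ux = ip d x x + of_real t * (ip d (mv d A x) x + ip d x (mv d A x)) + of_real t * of_real t * ip d (mv d A x) (mv d A x)"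
            unfolding ux_def ip_as_form form_add_l form_add_r form_scal_l form_scal_r complex_cnj_complex_of_real
            by (simp add: algebra_simps)
          have i2: "ip d (bx B) (bx B) = of_real t * ip d (mv d B x) (mv d B x)" for B
            unfolding bx_def ip_as_form form_scal_l form_scal_r complex_cnj_complex_of_real
            using st by (simp add: mult.assoc[symmetric])
          have "complex_of_real (nsq d ux + sum_list (map (\<lambda>B. nsq d (bx B)) Bs))
             = ip d ux ux + sum_list (map (\<lambda>B. ip d (bx B) (bx B)) Bs)"
            by (simp add: of_real_sum_list ip_self_sym o_def)
          also have "\<dots> = ip d x x + of_real t * (ip d (mv d A x) x + ip d x (mv d A x) + sum_list (map (\<lambda>B. ip d (mv d B x) (mv d B x)) Bs)) + of_real t * of_real t * ip d (mv d A x) (mv d A x)"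
            unfolding i1 i2 by (simp add: o_def sum_list_const_mult algebra_simps)
          also have "\<dots> = 1 + of_real t * \<beta> + of_real t * of_real t * of_real (nsq d (mv d A x))"
            using Mip[of x x] x by (simp add: ip_self)
          finally have "complex_of_real (nsq d ux + sum_list (map (\<lambda>B. nsq d (bx B)) Bs)) = 1 + of_real t * \<beta> + of_real t * of_real t * of_real (nsq d (mv d A x))" .
          then have "Re (complex_of_real (nsq d ux + sum_list (map (\<lambda>B. nsq d (bx B)) Bs))) = Re (1 + of_real t * \<beta> + of_real t * of_real t * of_real (nsq d (mv d A x)))"
            by simp
          then show ?thesis by (simp add: power2_eq_square)
        qed
        have nx: "nsq d ux + sum_list (map (\<lambda>B. nsq d (bx B)) Bs) = 1 + t * Re \<beta> + t\<^sup>2 * nsq d (mv d A x)"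
          by (rule nsqu[OF ux_def bx_def x])
        have ny: "nsq d uy + sum_list (map (\<lambda>B. nsq d (by' B)) Bs) = 1 + t * Re \<beta> + t\<^sup>2 * nsq d (mv d A y)"
          by (rule nsqu[OF uy_def by'_def y])
        have ax: "nsq d (mv d A x) \<le> c" unfolding c_def by (rule nsqA_bound[OF x])
        have ay: "nsq d (mv d A y) \<le> c" unfolding c_def by (rule nsqA_bound[OF y])
        have "sum_list (map (\<lambda>(u,w). nsq d u + nsq d w) ps) = (nsq d ux + sum_list (map (\<lambda>B. nsq d (bx B)) Bs)) + (nsq d uy + sum_list (map (\<lambda>B. nsq d (by' B)) Bs))"
          unfolding ps_def by (simp add: o_def sum_list_addf)
        also have "\<dots> \<le> 2 * (1 + t * Re \<beta> + t\<^sup>2 * c)"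
        proof -
          have "t\<^sup>2 * nsq d (mv d A x) \<le> t\<^sup>2 * c" by (rule mult_left_mono[OF ax]) simp
          moreover have "t\<^sup>2 * nsq d (mv d A y) \<le> t\<^sup>2 * c" by (rule mult_left_mono[OF ay]) simp
          ultimately show ?thesis unfolding nx ny by simp
        qed
        finally have sl: "sum_list (map (\<lambda>(u,w). nsq d u + nsq d w) ps) \<le> 2 * (1 + t * Re \<beta> + t\<^sup>2 * c)" .
        have sz0: "0 \<le> sZ d Z" using sZ_nonneg[OF d] .
        have t1: "cmod (sum_list (map (\<lambda>(u,w). form d Z u w) ps)) \<le> sZ d Z * (1 + t * Re \<beta> + t\<^sup>2 * c)"
        proof -
          have "cmod (sum_list (map (\<lambda>(u,w). form d Z u w) ps)) \<le> sZ d Z * sum_list (map (\<lambda>(u,w). nsq d u + nsq d w) ps) / 2"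
            by (rule sZ_pairs[OF d])
          also have "\<dots> \<le> sZ d Z * (2 * (1 + t * Re \<beta> + t\<^sup>2 * c)) / 2"
            by (intro divide_right_mono mult_left_mono sl sz0) simp
          also have "\<dots> = sZ d Z * (1 + t * Re \<beta> + t\<^sup>2 * c)" by simp
          finally show ?thesis .
        qed
        have t2: "cmod (of_real t * of_real t * form d Z (mv d A x) (mv d A y)) \<le> t\<^sup>2 * (sZ d Z * c)"
        proof -
          have "cmod (form d Z (mv d A x) (mv d A y)) \<le> sZ d Z * sqrt (nsq d (mv d A x)) * sqrt (nsq d (mv d A y))"
            by (rule sZ_scale[OF d])
          also have "\<dots> \<le> sZ d Z * sqrt c * sqrt c"
            by (intro mult_mono real_sqrt_le_mono ax ay mult_nonneg_nonneg sz0) (auto simp: nsq_nonneg c0)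
          also have "\<dots> = sZ d Z * c" using c0 by (simp add: mult.assoc)
          finally show ?thesis using t by (simp add: norm_mult power2_eq_square abs_of_pos mult_left_mono)
        qed
        have "cmod (1 + of_real t * \<mu>) * cmod (form d Z x y) = cmod ((1 + of_real t * \<mu>) * form d Z x y)"
          by (simp add: norm_mult)
        also have "\<dots> \<le> cmod (sum_list (map (\<lambda>(u,w). form d Z u w) ps)) + cmod (of_real t * of_real t * form d Z (mv d A x) (mv d A y))"
          unfolding decomp by (rule norm_triangle_ineq4)
        also have "\<dots> \<le> sZ d Z * R" using t1 t2 unfolding R_def by (simp add: algebra_simps)
        finally show "cmod (1 + of_real t * \<mu>) * cmod (form d Z x y) \<le> sZ d Z * R" .
      qed
      then have "cmod (1 + of_real t * \<mu>) \<le> R" using sp by (simp add: mult.commute)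
      moreover have "Re (1 + of_real t * \<mu>) \<le> cmod (1 + of_real t * \<mu>)" by (rule complex_Re_le_cmod)
      ultimately have "1 + t * Re \<mu> \<le> 1 + t * Re \<beta> + 2 * t\<^sup>2 * c" unfolding R_def by simp
      then have "t * Re \<mu> \<le> t * (Re \<beta> + 2 * t * c)" by (simp add: algebra_simps power2_eq_square)
      then show ?thesis using t by simp
    qed
    show ?thesis
    proof (rule ccontr)
      assume "\<not> Re \<mu> \<le> Re \<beta>"
      define \<delta> where "\<delta> = Re \<mu> - Re \<beta>"
      have dp: "0 < \<delta>" using \<open>\<not> Re \<mu> \<le> Re \<beta>\<close> unfolding \<delta>_def by simp
      define t where "t = \<delta> / (4 * c + 4)"
      have tp: "0 < t" using dp c0 unfolding t_def by simp
      have e: "2 * t * c * (4 * c + 4) = 2 * c * \<delta>" using c0 unfolding t_def by simp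
      have l: "2 * c * \<delta> < \<delta> * (4 * c + 4)"
      proof -
        have h: "0 < \<delta> * (2*c+4)" by (rule mult_pos_pos) (use dp c0 in auto)
        then show ?thesis by (simp add: algebra_simps)
      qed
      from e l have "2 * t * c * (4 * c + 4) < \<delta> * (4 * c + 4)" by linarith
      then have "2 * t * c < \<delta>" using c0 by (simp add: mult_less_cancel_right)
      then show False using key[OF tp] unfolding \<delta>_def by simp
    qed
  qed
  have att: "\<beta> \<in> spectrum D"
  proof (rule attain[OF Dc d])
    fix i1 i2 assume "i1 < d" "i2 < d"
    show "form d (TT d D (\<lambda>a b. if a = b then 1 else 0)) (ee i1) (ee i2) = \<beta> * ip d (ee i1) (ee i2)"
      unfolding kraus form_delta Mip ..
  qed
  have "spectral_abscissa D = Re \<beta>"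
    unfolding spectral_abscissa_def
  proof (rule Max_eqI)
    show "finite (Re ` spectrum D)" using card_finite_spectrum(1)[OF Dc] by simp
    show "y \<le> Re \<beta>" if "y \<in> Re ` spectrum D" for y using that upper by auto
    show "Re \<beta> \<in> Re ` spectrum D" using att by force
  qed
  then show ?thesis using imb unfolding D_def by simp
qed


theorem corollary1p2:
  fixes d :: nat and A :: "complex mat" and Bs :: "complex mat list" and \<beta> :: complex
  assumes "0 < d"
    and "A \<in> carrier_mat d d"
    and "\<forall>B \<in> set Bs. B \<in> carrier_mat d d"
  shows "(mat_adjoint A * A + msum d (map (\<lambda>B. mat_adjoint B * B) Bs) = \<beta> \<cdot>\<^sub>m 1\<^sub>m d
           \<longrightarrow> spectral_radius (kron (mat_cnj A) A + msum (d * d) (map (\<lambda>B. kron (mat_cnj B) B) Bs))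
               = \<beta>)
       \<and> (A + mat_adjoint A + msum d (map (\<lambda>B. mat_adjoint B * B) Bs) = \<beta> \<cdot>\<^sub>m 1\<^sub>m d
           \<longrightarrow> spectral_abscissa (kron (mat_cnj A) (1\<^sub>m d) + kron (1\<^sub>m d) A
                  + msum (d * d) (map (\<lambda>B. kron (mat_cnj B) B) Bs))
               = \<beta>)"
  proof (intro conjI impI)
  assume N: "mat_adjoint A * A + msum d (map (\<lambda>B. mat_adjoint B * B) Bs) = \<beta> \<cdot>\<^sub>m 1\<^sub>m d"
  from part1[OF assms(1) assms(2) assms(3) N]
  show "spectral_radius (kron (mat_cnj A) A + msum (d * d) (map (\<lambda>B. kron (mat_cnj B) B) Bs)) = \<beta>"
    by (simp add: complex_eq_iff)
next
  assume M: "A + mat_adjoint A + msum d (map (\<lambda>B. mat_adjoint B * B) Bs) = \<beta> \<cdot>\<^sub>m 1\<^sub>m d"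
  from part2[OF assms(1) assms(2) assms(3) M]
  show "spectral_abscissa (kron (mat_cnj A) (1\<^sub>m d) + kron (1\<^sub>m d) A + msum (d * d) (map (\<lambda>B. kron (mat_cnj B) B) Bs)) = \<beta>"
    by (simp add: complex_eq_iff)
qed

end
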